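(* Let $G$ be a graph with a vertex $r$ that belongs to no minimum vertex cover of $G$ (so $\mathrm{OPT}(G-r)=\mathrm{OPT}(G)$), and let $Y$ be a minimal blocking set of $G$ with $r\notin Y$. Then there exists a (possibly empty) set $Z\subseteq N(r)$ such that $Y\cup Z$ is a minimal blocking set of $G-r$.
   Context: $\mathrm{OPT}(G)$ is the minimum vertex cover size; minimum vertex covers have size $\mathrm{OPT}(G)$. $Y\subseteq V(G)$ is a blocking set if no minimum vertex cover contains $Y$; minimal if no proper subset is. $N(r)$ is the set of neighbors of $r$. *)

theory Defs
  imports Main
begin

definition graph :: "'a set \<Rightarrow> 'a set set \<Rightarrow> bool" where
  "graph V E \<longleftrightarrow> finite V \<and> (\<forall>e\<in>E. e \<subseteq> V \<and> card e = 2)"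

definition vertex_cover :: "'a set \<Rightarrow> 'a set set \<Rightarrow> 'a set \<Rightarrow> bool" where
  "vertex_cover V E C \<longleftrightarrow> C \<subseteq> V \<and> (\<forall>e\<in>E. e \<inter> C \<noteq> {})"

definition OPT :: "'a set \<Rightarrow> 'a set set \<Rightarrow> nat" where
  "OPT V E = (LEAST k. \<exists>C. vertex_cover V E C \<and> card C = k)"

definition min_vertex_cover :: "'a set \<Rightarrow> 'a set set \<Rightarrow> 'a set \<Rightarrow> bool" where
  "min_vertex_cover V E C \<longleftrightarrow> vertex_cover V E C \<and> card C = OPT V E"

definition blocking :: "'a set \<Rightarrow> 'a set set \<Rightarrow> 'a set \<Rightarrow> bool" where
  "blocking V E Y \<longleftrightarrow> Y \<subseteq> V \<and> \<not> (\<exists>C. min_vertex_cover V E C \<and> Y \<subseteq> C)"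

definition minimal_blocking :: "'a set \<Rightarrow> 'a set set \<Rightarrow> 'a set \<Rightarrow> bool" where
  "minimal_blocking V E Y \<longleftrightarrow> blocking V E Y \<and> (\<forall>Y'. Y' \<subset> Y \<longrightarrow> \<not> blocking V E Y')"

definition nbrs :: "'a set set \<Rightarrow> 'a \<Rightarrow> 'a set" where
  "nbrs E r = {v. {r, v} \<in> E}"

definition del_V :: "'a set \<Rightarrow> 'a \<Rightarrow> 'a set" where
  "del_V V r = V - {r}"

definition del_E :: "'a set set \<Rightarrow> 'a \<Rightarrow> 'a set set" where
  "del_E E r = {e \<in> E. r \<notin> e}"

end

theory Submission
  imports Defs
begin

lemma opt_le:
  assumes "vertex_cover V E C" shows "OPT V E \<le> card C"
  unfolding OPT_def by (rule Least_le) (use assms in blast)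

lemma min_exists:
  assumes "vertex_cover V E C" shows "\<exists>C. min_vertex_cover V E C"
proof -
  have "\<exists>C. vertex_cover V E C \<and> card C = OPT V E"
    unfolding OPT_def by (rule LeastI_ex) (use assms in blast)
  thus ?thesis unfolding min_vertex_cover_def by blast
qed

theorem mainTheorem18:
  fixes V :: "'a set" and E :: "'a set set" and r :: 'a and Y :: "'a set"
  assumes "graph V E"
    and "r \<in> V"
    and "\<forall>C. min_vertex_cover V E C \<longrightarrow> r \<notin> C"
    and "minimal_blocking V E Y"
    and "r \<notin> Y"
  shows "\<exists>Z. Z \<subseteq> nbrs E r \<and> minimal_blocking (del_V V r) (del_E E r) (Y \<union> Z)"
proof -
  let ?V = "del_V V r" and ?E = "del_E E r" and ?N = "nbrs E r"
  have finV: "finite V" and eV: "\<And>e. e \<in> E \<Longrightarrow> e \<subseteq> V \<and> card e = 2"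
    using assms(1) unfolding graph_def by auto
  have Nsub: "?N \<subseteq> ?V"
  proof
    fix v assume "v \<in> ?N"
    hence "{r,v} \<in> E" unfolding nbrs_def by auto
    from eV[OF this] show "v \<in> ?V" unfolding del_V_def
      by (cases "v = r") auto
  qed
  have finN: "finite ?N" using Nsub finV unfolding del_V_def
    by (meson finite_Diff finite_subset)
  have vcV: "vertex_cover V E V" unfolding vertex_cover_def
    using eV by (fastforce simp: card_2_iff)
  obtain C0 where C0: "min_vertex_cover V E C0" using min_exists[OF vcV] by blast
  have a: "vertex_cover ?V ?E C \<and> ?N \<subseteq> C" if "vertex_cover V E C" "r \<notin> C" for C
    using that unfolding vertex_cover_def del_V_def del_E_def nbrs_def by fastforce
  have b: "vertex_cover V E C" if "vertex_cover ?V ?E C" "?N \<subseteq> C" for C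
    unfolding vertex_cover_def
  proof
    show "C \<subseteq> V" using that unfolding vertex_cover_def del_V_def by auto
    show "\<forall>e\<in>E. e \<inter> C \<noteq> {}"
    proof
      fix e assume e: "e \<in> E"
      show "e \<inter> C \<noteq> {}"
      proof (cases "r \<in> e")
        case False thus ?thesis using that e unfolding vertex_cover_def del_E_def by auto
      next
        case True
        from eV[OF e] obtain x y where xy: "e = {x,y}" "x \<noteq> y" by (auto simp: card_2_iff)
        then obtain v where "e = {r,v}" using True by auto
        hence "v \<in> ?N" using e unfolding nbrs_def by auto
        thus ?thesis using that \<open>e = {r,v}\<close> by auto
      qed
    qed
  qed
  have rC0: "r \<notin> C0" using C0 assms(3) by blast
  have le1: "OPT ?V ?E \<le> OPT V E"
    using opt_le[of ?V ?E C0] a[of C0] C0 rC0 unfolding min_vertex_cover_def by auto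
  have vcV': "vertex_cover ?V ?E C0" using a[of C0] C0 rC0 unfolding min_vertex_cover_def by auto
  obtain C1 where C1: "min_vertex_cover ?V ?E C1" using min_exists[OF vcV'] by blast
  have eq: "OPT ?V ?E = OPT V E"
  proof (rule ccontr)
    assume "OPT ?V ?E \<noteq> OPT V E"
    hence lt: "OPT ?V ?E < OPT V E" using le1 by auto
    have C1s: "C1 \<subseteq> ?V" using C1 unfolding min_vertex_cover_def vertex_cover_def by auto
    hence rC1: "r \<notin> C1" and fC1: "finite C1" unfolding del_V_def using finV finite_subset by auto
    have vc: "vertex_cover V E (insert r C1)"
      using C1 C1s assms(2) unfolding min_vertex_cover_def vertex_cover_def del_V_def del_E_def
      by auto
    have cd: "card (insert r C1) = OPT ?V ?E + 1"
      using rC1 fC1 C1 unfolding min_vertex_cover_def by auto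
    have "OPT V E \<le> card (insert r C1)" using opt_le[OF vc] .
    hence "card (insert r C1) = OPT V E" using cd lt by auto
    hence "min_vertex_cover V E (insert r C1)" using vc unfolding min_vertex_cover_def by auto
    thus False using assms(3) by auto
  qed
  have A: "min_vertex_cover ?V ?E C \<and> ?N \<subseteq> C" if "min_vertex_cover V E C" for C
    using a[of C] that assms(3) eq unfolding min_vertex_cover_def by auto
  have B: "min_vertex_cover V E C" if "min_vertex_cover ?V ?E C" "?N \<subseteq> C" for C
    using b[of C] that eq unfolding min_vertex_cover_def by auto
  have Ybl: "blocking V E Y" and Ymin: "\<And>Y'. Y' \<subset> Y \<Longrightarrow> \<not> blocking V E Y'"
    using assms(4) unfolding minimal_blocking_def by auto
  have YV: "Y \<subseteq> ?V" using Ybl assms(5) unfolding blocking_def del_V_def by auto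
  let ?P = "\<lambda>k. \<exists>Z. Z \<subseteq> ?N \<and> blocking ?V ?E (Y \<union> Z) \<and> card Z = k"
  have PN: "?P (card ?N)"
  proof (intro exI conjI)
    show "blocking ?V ?E (Y \<union> ?N)" unfolding blocking_def
      using YV Nsub B Ybl unfolding blocking_def by blast
  qed auto
  obtain Z where Z: "Z \<subseteq> ?N" "blocking ?V ?E (Y \<union> Z)" "card Z = (LEAST k. ?P k)"
    using LeastI_ex[of ?P] PN by blast
  have finZ: "finite Z" using Z(1) finN finite_subset by blast
  have Zsmall: "\<not> blocking ?V ?E (Y \<union> (Z - {z}))" if "z \<in> Z" for z
  proof
    assume bl: "blocking ?V ?E (Y \<union> (Z - {z}))"
    have "card (Z - {z}) < card Z" using finZ that by (meson card_Diff1_less)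
    moreover have "?P (card (Z - {z}))" using bl Z(1) by blast
    ultimately show False using Z(3) not_less_Least[of "card (Z - {z})" ?P] by simp
  qed
  have disj: "Y \<inter> Z = {}"
  proof (rule ccontr)
    assume "Y \<inter> Z \<noteq> {}"
    then obtain z where "z \<in> Y" "z \<in> Z" by blast
    hence "Y \<union> (Z - {z}) = Y \<union> Z" by auto
    thus False using Zsmall[OF \<open>z \<in> Z\<close>] Z(2) by simp
  qed
  have one: "\<exists>C. min_vertex_cover ?V ?E C \<and> Y \<union> Z - {x} \<subseteq> C" if "x \<in> Y \<union> Z" for x
  proof (cases "x \<in> Y")
    case True
    have "\<not> blocking V E (Y - {x})" using Ymin True by auto
    moreover have "Y - {x} \<subseteq> V" using YV unfolding del_V_def by auto
    ultimately obtain C where "min_vertex_cover V E C" "Y - {x} \<subseteq> C"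
      unfolding blocking_def by blast
    with A[of C] Z(1) disj True show ?thesis by blast
  next
    case False
    hence xZ: "x \<in> Z" using that by auto
    have "Y \<union> (Z - {x}) \<subseteq> ?V" using YV Z(1) Nsub by auto
    with Zsmall[OF xZ] obtain C where "min_vertex_cover ?V ?E C" "Y \<union> (Z - {x}) \<subseteq> C"
      unfolding blocking_def by blast
    thus ?thesis using False by blast
  qed
  have "minimal_blocking ?V ?E (Y \<union> Z)"
    unfolding minimal_blocking_def
  proof (intro conjI allI impI)
    show "blocking ?V ?E (Y \<union> Z)" by (rule Z(2))
    fix Y' assume "Y' \<subset> Y \<union> Z"
    then obtain x where x: "x \<in> Y \<union> Z" "Y' \<subseteq> Y \<union> Z - {x}" by blast
    from one[OF x(1)] obtain C where "min_vertex_cover ?V ?E C" "Y \<union> Z - {x} \<subseteq> C" by blast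
    thus "\<not> blocking ?V ?E Y'" using x(2) unfolding blocking_def by blast
  qed
  thus ?thesis using Z(1) by blast
qed

end
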